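(* Let $n\ge1$. Let $(\mu_b)_{0\ne b\in\mathbb N^p,\ \mathrm{ht}(\underline b)<n}$ be a family of elements of $k$ and $(u^b)_{0\ne b\in\mathbb N^p,\ \mathrm{ht}(\underline b)<n}$ a family of elements of $k[\Gamma]$ such that for all such $b$ $$u^b=\mu_b(1-h^b)+\sum_{d,e\ne0,\ \underline d+\underline e=\underline b}t^b_{d,e}\mu_du^e,\qquad \Delta(u^b)=h^b\otimes u^b+u^b\otimes1+\sum_{d,e\ne0,\ \underline d+\underline e=\underline b}t^b_{d,e}u^dh^e\otimes u^e.$$ Let $a\in\mathbb N^p$ with $\mathrm{ht}(\underline a)=n$ and $u^a\in k[\Gamma]$. Then the following are equivalent: (i) $u^a=\mu_a(1-h^a)+\sum_{b,c\ne0,\ \underline b+\underline c=\underline a}t^a_{b,c}\mu_bu^c$ for some $\mu_a\in k$; (ii) $\Delta(u^a)=h^a\otimes u^a+u^a\otimes1+\sum_{b,c\ne0,\ \underline b+\underline c=\underline a}t^a_{b,c}u^bh^c\otimes u^c$.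
   Context: $k$ algebraically closed of characteristic $0$. $\mathcal D=\mathcal D(\Gamma,(g_i),(\chi_i),(a_{ij}))$ is a connected datum of finite Cartan type (i.e. $g_i\in\Gamma$, $\chi_i$ characters of the finite abelian group $\Gamma$, $(a_{ij})$ a connected Cartan matrix of finite type, $q_{ij}=\chi_j(g_i)$, $q_{ij}q_{ji}=q_{ii}^{a_{ij}}$, $q_{ii}\ne1$) such that each $q_{ii}$ has odd order, prime to 3 in type $G_2$; $N$ is the common order of the $q_{ii}$. $\Phi^+=\{\beta_1,\dots,\beta_p\}$ is the set of positive roots in the convex order given by a fixed reduced expression of the longest Weyl group element; for $\alpha=\sum n_i\alpha_i$, $g_\alpha=\prod g_i^{n_i}$, $\chi_\alpha=\prod\chi_i^{n_i}$, $\mathrm{ht}(\alpha)=\sum n_i$. $R(\mathcal D)$ is the tensor algebra $k\langle x_1,\dots,x_\theta\rangle$ (braided Hopf algebra in Yetter–Drinfeld modules over $\Gamma$, $x_i$ primitive of $\Gamma$-degree $g_i$ and weight $\chi_i$, braiding $c(x\otimes y)=\chi_\beta(g_\alpha)y\otimes x$ for $x,y$ of $\mathbb Z^\theta$-degrees $\alpha,\beta$) modulo the quantum Serre relations $\mathrm{ad}_c(x_i)^{1-a_{ij}}(x_j)$, $i\ne j$; $x_{\beta_l}$ are the root vectors (the iterated braided commutators corresponding to Lusztig's PBW root vectors). Put $z_l=x_{\beta_l}^N$, $h_l=g_{\beta_l}^N$, and for $a\in\mathbb N^p$: $z^a=z_1^{a_1}\cdots z_p^{a_p}$, $h^a=h_1^{a_1}\cdots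 h_p^{a_p}$, $\underline a=\sum a_l\beta_l\in\mathbb Z^\theta$. The subalgebra $K(\mathcal D)$ generated by the $z_l$ is a braided Hopf subalgebra with basis $(z^a)_{a\in\mathbb N^p}$, and $t^a_{b,c}\in k$ ($0\ne b,c$) are the unique scalars with $\Delta_{K(\mathcal D)}(z^a)=z^a\otimes1+1\otimes z^a+\sum_{b,c\ne0,\underline b+\underline c=\underline a}t^a_{b,c}z^b\otimes z^c$. $\Delta$ in the claim is the comultiplication of the group algebra $k[\Gamma]$. *)

theory Defs
  imports Main
begin

text \<open>The finite abelian group Gamma is a type 'g of class ab_group_add (written additively,
 so group products become sums and the unit is 0).  The group algebra k[Gamma] is
 the function space 'g => 'k (coefficient functions); k[Gamma] (x) k[Gamma] is identified
 with functions 'g * 'g => 'k.  Elements of N^p are functions nat => nat vanishing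
 from p on; elements of Z^theta (positive-root coordinates) are functions nat => nat
 vanishing from theta on.  beta l i is the coefficient of alpha_i in beta_(l+1).\<close>

definition NP :: "nat \<Rightarrow> (nat \<Rightarrow> nat) set" where
  "NP p = {a. \<forall>l\<ge>p. a l = 0}"

definition zvec :: "nat \<Rightarrow> nat" where
  "zvec = (\<lambda>_. 0)"

definition ul :: "nat \<Rightarrow> (nat \<Rightarrow> nat \<Rightarrow> nat) \<Rightarrow> (nat \<Rightarrow> nat) \<Rightarrow> (nat \<Rightarrow> nat)" where
  "ul p \<beta> a = (\<lambda>i. \<Sum>l<p. a l * \<beta> l i)"

definition ht :: "nat \<Rightarrow> (nat \<Rightarrow> nat) \<Rightarrow> nat" where
  "ht \<theta> \<alpha> = (\<Sum>i<\<theta>. \<alpha> i)"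

definition gmul :: "nat \<Rightarrow> 'g::ab_group_add \<Rightarrow> 'g" where
  "gmul n x = (\<Sum>j<n. x)"

definition galpha :: "nat \<Rightarrow> (nat \<Rightarrow> 'g::ab_group_add) \<Rightarrow> (nat \<Rightarrow> nat) \<Rightarrow> 'g" where
  "galpha \<theta> g \<alpha> = (\<Sum>i<\<theta>. gmul (\<alpha> i) (g i))"

definition hpow :: "nat \<Rightarrow> (nat \<Rightarrow> 'g::ab_group_add) \<Rightarrow> nat \<Rightarrow> nat \<Rightarrow> (nat \<Rightarrow> nat \<Rightarrow> nat)
    \<Rightarrow> (nat \<Rightarrow> nat) \<Rightarrow> 'g" where
  "hpow \<theta> g N p \<beta> a = (\<Sum>l<p. gmul (a l) (gmul N (galpha \<theta> g (\<beta> l))))"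

definition splits :: "nat \<Rightarrow> (nat \<Rightarrow> nat \<Rightarrow> nat) \<Rightarrow> (nat \<Rightarrow> nat)
    \<Rightarrow> ((nat \<Rightarrow> nat) \<times> (nat \<Rightarrow> nat)) set" where
  "splits p \<beta> a = {(b, c). b \<in> NP p \<and> c \<in> NP p \<and> b \<noteq> zvec \<and> c \<noteq> zvec \<and>
       (\<lambda>i. ul p \<beta> b i + ul p \<beta> c i) = ul p \<beta> a}"

definition gdelta :: "'g \<Rightarrow> 'g \<Rightarrow> 'k::field" where
  "gdelta x = (\<lambda>y. if y = x then 1 else 0)"

definition gconv :: "('g::{ab_group_add,finite} \<Rightarrow> 'k::field) \<Rightarrow> ('g \<Rightarrow> 'k) \<Rightarrow> 'g \<Rightarrow> 'k" where
  "gconv f h = (\<lambda>x. \<Sum>y\<in>UNIV. f y * h (x - y))"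

definition gtens :: "('g \<Rightarrow> 'k::field) \<Rightarrow> ('g \<Rightarrow> 'k) \<Rightarrow> 'g \<times> 'g \<Rightarrow> 'k" where
  "gtens f h = (\<lambda>(x, y). f x * h y)"

definition gcomult :: "('g \<Rightarrow> 'k::field) \<Rightarrow> 'g \<times> 'g \<Rightarrow> 'k" where
  "gcomult f = (\<lambda>(x, y). if x = y then f x else 0)"

text \<open>Abstraction of the coproduct of K(D): full structure constants of
  Delta(z^a) = z^a (x) 1 + 1 (x) z^a + sum t^a_{b,c} z^b (x) z^c  (with z^0 = 1), and
  coassociativity (Delta (x) id) Delta = (id (x) Delta) Delta on the basis (z^a).\<close>
definition tfull :: "nat \<Rightarrow> (nat \<Rightarrow> nat \<Rightarrow> nat)
    \<Rightarrow> ((nat \<Rightarrow> nat) \<Rightarrow> (nat \<Rightarrow> nat) \<Rightarrow> (nat \<Rightarrow> nat) \<Rightarrow> 'k::field)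
    \<Rightarrow> (nat \<Rightarrow> nat) \<Rightarrow> (nat \<Rightarrow> nat) \<Rightarrow> (nat \<Rightarrow> nat) \<Rightarrow> 'k" where
  "tfull p \<beta> t a b c =
     (if b = zvec then (if c = a then 1 else 0)
      else if c = zvec then (if b = a then 1 else 0)
      else if (b, c) \<in> splits p \<beta> a then t a b c else 0)"

definition below :: "nat \<Rightarrow> (nat \<Rightarrow> nat \<Rightarrow> nat) \<Rightarrow> (nat \<Rightarrow> nat) \<Rightarrow> (nat \<Rightarrow> nat) set" where
  "below p \<beta> a = {y \<in> NP p. \<forall>i. ul p \<beta> y i \<le> ul p \<beta> a i}"

definition coassoc_coeffs :: "nat \<Rightarrow> (nat \<Rightarrow> nat \<Rightarrow> nat)
    \<Rightarrow> ((nat \<Rightarrow> nat) \<Rightarrow> (nat \<Rightarrow> nat) \<Rightarrow> (nat \<Rightarrow> nat) \<Rightarrow> 'k::field) \<Rightarrow> bool" where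
  "coassoc_coeffs p \<beta> t =
     (\<forall>a\<in>NP p. \<forall>x\<in>NP p. \<forall>w\<in>NP p. \<forall>z\<in>NP p.
        (\<Sum>y\<in>below p \<beta> a. tfull p \<beta> t a y z * tfull p \<beta> t y x w)
      = (\<Sum>y\<in>below p \<beta> a. tfull p \<beta> t a x y * tfull p \<beta> t y w z))"

end

theory Submission
  imports Defs "HOL-Library.FuncSet"
begin

lemma gmul_add: "gmul (m + n) x = gmul m x + gmul n (x::'g::ab_group_add)"
  by (induction n) (simp_all add: gmul_def add.assoc)

lemma gmul_mult: "gmul (m * n) x = gmul m (gmul n (x::'g::ab_group_add))"
  proof (induction m)
  case 0 then show ?case by (simp add: gmul_def)
next
  case (Suc m)
  have "gmul (Suc m * n) x = gmul n x + gmul (m * n) x" by (simp add: gmul_add)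
  also have "\<dots> = gmul n x + gmul m (gmul n x)" using Suc by simp
  also have "\<dots> = gmul (Suc m) (gmul n x)" by (simp add: gmul_def add.commute)
  finally show ?case .
qed

lemma gmul_plus: "gmul n (x + y) = gmul n x + gmul n (y::'g::ab_group_add)"
  by (simp add: gmul_def sum.distrib)

lemma gmul_sum: "gmul n (sum f A) = (\<Sum>i\<in>A. gmul n (f i :: 'g::ab_group_add))"
  unfolding gmul_def by (rule sum.swap)

lemma sum_gmul: "finite A \<Longrightarrow> gmul (sum f A) x = (\<Sum>i\<in>A. gmul (f i) (x::'g::ab_group_add))"
  by (induction A rule: finite_induct) (simp_all add: gmul_add, simp add: gmul_def)

lemma hpow_eq: "hpow \<theta> g N p \<beta> a = gmul N (galpha \<theta> g (ul p \<beta> a))"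
proof -
  have "hpow \<theta> g N p \<beta> a = (\<Sum>l<p. \<Sum>i<\<theta>. gmul (N * (a l * \<beta> l i)) (g i))"
    unfolding hpow_def galpha_def
    by (simp add: gmul_sum gmul_mult[symmetric] mult.commute mult.left_commute)
  also have "\<dots> = (\<Sum>i<\<theta>. \<Sum>l<p. gmul (N * (a l * \<beta> l i)) (g i))"
    by (rule sum.swap)
  also have "\<dots> = gmul N (galpha \<theta> g (ul p \<beta> a))"
    unfolding galpha_def ul_def
    by (simp add: gmul_sum gmul_mult[symmetric] sum_gmul sum_distrib_left)
  finally show ?thesis .
qed

lemma hpow_split:
  assumes "(b, c) \<in> splits p \<beta> a"
  shows "hpow \<theta> g N p \<beta> a = hpow \<theta> g N p \<beta> b + hpow \<theta> g N p \<beta> c"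
proof -
  have e: "ul p \<beta> a = (\<lambda>i. ul p \<beta> b i + ul p \<beta> c i)" using assms by (simp add: splits_def)
  show ?thesis unfolding hpow_eq e galpha_def
    by (simp add: gmul_add sum.distrib gmul_plus)
qed

lemma gconv_delta: "gconv f (gdelta h) x = (f (x - h) :: 'k::field)"
proof -
  have "gconv f (gdelta h) x = (\<Sum>y\<in>UNIV. if y = x - h then f y else 0)"
    unfolding gconv_def gdelta_def by (rule sum.cong) auto
  also have "\<dots> = f (x - h)" by simp
  finally show ?thesis .
qed

lemma skew:
  fixes v :: "'g::ab_group_add \<Rightarrow> 'k::field"
  assumes "\<forall>x y. gcomult v (x,y) = gtens (gdelta h) v (x,y) + gtens v (gdelta 0) (x,y)"
  shows "\<forall>x. v x = v 0 * (gdelta 0 x - gdelta h x)"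
proof
  fix x
  have A: "\<And>x y. (if x = y then v x else 0) = (if x = h then 1 else 0) * v y + v x * (if y = 0 then 1 else 0)"
    using assms unfolding gcomult_def gtens_def gdelta_def by auto
  show "v x = v 0 * (gdelta 0 x - gdelta h x)"
  proof (cases "h = 0")
    case True
    have "v 0 = v 0 + v 0" using A[of 0 0] True by simp
    hence "v 0 = 0" by (metis add_cancel_left_right)
    moreover have "x \<noteq> 0 \<Longrightarrow> v x = 0" using A[of x x] True by simp
    ultimately show ?thesis using True by (cases "x = 0") (auto simp: gdelta_def)
  next
    case False
    have "v h = - v 0" using A[of h 0] False by (simp add: eq_neg_iff_add_eq_0 add.commute)
    moreover have "x \<noteq> 0 \<Longrightarrow> x \<noteq> h \<Longrightarrow> v x = 0" using A[of x x] by simp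
    ultimately show ?thesis using False by (auto simp: gdelta_def)
  qed
qed


lemma ul_pos:
  assumes roots: "\<forall>l<p. (\<exists>i<\<theta>. \<beta> l i \<noteq> 0) \<and> (\<forall>i\<ge>\<theta>. \<beta> l i = 0)"
    and "y \<in> NP p" "y \<noteq> zvec"
  shows "\<exists>i<\<theta>. ul p \<beta> y i > 0"
proof -
  obtain l where l: "y l \<noteq> 0" using assms(3) unfolding zvec_def by auto
  have "l < p" using assms(2) l unfolding NP_def by (cases "l < p") auto
  then obtain i where i: "i<\<theta>" "\<beta> l i \<noteq> 0" using roots by auto
  have "y l * \<beta> l i \<le> ul p \<beta> y i" unfolding ul_def using \<open>l<p\<close>
    by (intro member_le_sum) auto
  moreover have "y l * \<beta> l i > 0" using l i by simp
  ultimately show ?thesis using i by (meson less_le_trans)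
qed

lemma below_finite:
  assumes roots: "\<forall>l<p. (\<exists>i<\<theta>. \<beta> l i \<noteq> 0) \<and> (\<forall>i\<ge>\<theta>. \<beta> l i = 0)"
  shows "finite (below p \<beta> a)"
proof -
  define K where "K = (\<Sum>i<\<theta>. ul p \<beta> a i)"
  have "below p \<beta> a \<subseteq> (\<lambda>f l. if l < p then f l else 0) ` (PiE {..<p} (\<lambda>_. {..K}))"
  proof
    fix y assume y: "y \<in> below p \<beta> a"
    hence yNP: "y \<in> NP p" and le: "\<And>i. ul p \<beta> y i \<le> ul p \<beta> a i" by (auto simp: below_def)
    have bnd: "y l \<le> K" if lp: "l < p" for l
    proof -
      obtain i where i: "i<\<theta>" "\<beta> l i \<noteq> 0" using roots lp by auto
      have "y l \<le> y l * \<beta> l i" using i by simp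
      also have "\<dots> \<le> ul p \<beta> y i" unfolding ul_def using lp by (intro member_le_sum) auto
      also have "\<dots> \<le> ul p \<beta> a i" by (rule le)
      also have "\<dots> \<le> K" unfolding K_def using i by (intro member_le_sum) auto
      finally show ?thesis .
    qed
    have "y = (\<lambda>l. if l < p then restrict y {..<p} l else 0)"
      using yNP by (auto simp: NP_def)
    moreover have "restrict y {..<p} \<in> PiE {..<p} (\<lambda>_. {..K})" using bnd by auto
    ultimately show "y \<in> (\<lambda>f l. if l < p then f l else 0) ` (PiE {..<p} (\<lambda>_. {..K}))" by blast
  qed
  moreover have "finite (PiE {..<p} (\<lambda>_. {..K}))" by (simp add: finite_PiE)
  ultimately show ?thesis by (meson finite_surj)
qed

lemma splits_sub:
  assumes "y \<in> below p \<beta> a"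
  shows "splits p \<beta> y \<subseteq> (below p \<beta> a - {zvec}) \<times> (below p \<beta> a - {zvec})"
proof
  fix de assume de0: "de \<in> splits p \<beta> y"
  obtain d e where dd: "de = (d, e)" by (cases de)
  have de: "(d, e) \<in> splits p \<beta> y" using de0 dd by simp
  have eq: "\<And>i. ul p \<beta> d i + ul p \<beta> e i = ul p \<beta> y i" using de
    unfolding splits_def by (auto dest: fun_cong)
  have le: "\<And>i. ul p \<beta> y i \<le> ul p \<beta> a i" using assms by (auto simp: below_def)
  have "d \<in> below p \<beta> a - {zvec}" "e \<in> below p \<beta> a - {zvec}"
    using de eq le unfolding splits_def below_def by (auto, (metis le_add1 le_trans le_add2)+)
  thus "de \<in> (below p \<beta> a - {zvec}) \<times> (below p \<beta> a - {zvec})" using dd by simp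
qed

lemma tfull_zvec:
  assumes roots: "\<forall>l<p. (\<exists>i<\<theta>. \<beta> l i \<noteq> 0) \<and> (\<forall>i\<ge>\<theta>. \<beta> l i = 0)"
    and "x \<in> NP p" "x \<noteq> zvec" "w \<noteq> zvec"
  shows "tfull p \<beta> t zvec x w = 0"
proof -
  obtain i where "ul p \<beta> x i > 0" using ul_pos[OF roots assms(2,3)] by auto
  moreover have "ul p \<beta> zvec i = 0" by (simp add: ul_def zvec_def)
  ultimately have "(x, w) \<notin> splits p \<beta> zvec" unfolding splits_def by (auto dest: fun_cong[where x = i])
  thus ?thesis using assms by (simp add: tfull_def)
qed

lemma sum_splits_tfull:
  assumes "finite V" "zvec \<notin> V" "splits p \<beta> y \<subseteq> V \<times> V"
  shows "(\<Sum>(b, c)\<in>splits p \<beta> y. t y b c * G b c) = (\<Sum>b\<in>V. \<Sum>c\<in>V. tfull p \<beta> t y b c * G b c)"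
proof -
  have "(\<Sum>b\<in>V. \<Sum>c\<in>V. tfull p \<beta> t y b c * G b c) = (\<Sum>(b, c)\<in>V \<times> V. tfull p \<beta> t y b c * G b c)"
    by (rule sum.cartesian_product)
  also have "\<dots> = (\<Sum>(b, c)\<in>splits p \<beta> y. tfull p \<beta> t y b c * G b c)"
    using assms by (intro sum.mono_neutral_right) (auto simp: tfull_def)
  also have "\<dots> = (\<Sum>(b, c)\<in>splits p \<beta> y. t y b c * G b c)"
    by (rule sum.cong) (auto simp: tfull_def splits_def)
  finally show ?thesis by simp
qed

lemma swap3: "(\<Sum>c\<in>A. \<Sum>d\<in>B. \<Sum>e\<in>C. f c d e) = (\<Sum>d\<in>B. \<Sum>e\<in>C. \<Sum>c\<in>A. f c d e)"
  by (subst sum.swap) (simp add: sum.swap[of _ A])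

lemma perm4: "(\<Sum>b\<in>A. \<Sum>c\<in>B. \<Sum>d\<in>C. \<Sum>e\<in>D. f b c d e) = (\<Sum>d\<in>C. \<Sum>e\<in>D. \<Sum>c\<in>B. \<Sum>b\<in>A. f b c d e)"
proof -
  have "(\<Sum>b\<in>A. \<Sum>c\<in>B. \<Sum>d\<in>C. \<Sum>e\<in>D. f b c d e) = (\<Sum>b\<in>A. \<Sum>d\<in>C. \<Sum>e\<in>D. \<Sum>c\<in>B. f b c d e)"
    by (rule sum.cong[OF refl], rule swap3)
  also have "\<dots> = (\<Sum>d\<in>C. \<Sum>e\<in>D. \<Sum>b\<in>A. \<Sum>c\<in>B. f b c d e)" by (rule swap3)
  also have "\<dots> = (\<Sum>d\<in>C. \<Sum>e\<in>D. \<Sum>c\<in>B. \<Sum>b\<in>A. f b c d e)" by (simp add: sum.swap[of _ A])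
  finally show ?thesis .
qed


lemma comb:
  assumes roots: "\<forall>l<p. (\<exists>i<\<theta>. \<beta> l i \<noteq> 0) \<and> (\<forall>i\<ge>\<theta>. \<beta> l i = 0)"
    and coassoc: "coassoc_coeffs p \<beta> t"
    and aNP: "a \<in> NP p"
  shows "(\<Sum>(b, c)\<in>splits p \<beta> a. t a b c * (\<Sum>(d, e)\<in>splits p \<beta> c. t c d e * F b d e))
       = (\<Sum>(b, c)\<in>splits p \<beta> a. t a b c * (\<Sum>(d, e)\<in>splits p \<beta> b. t b d e * F d e c))"
proof -
  define V where "V = below p \<beta> a - {zvec}"
  define tf where "tf = tfull p \<beta> t"
  have finB: "finite (below p \<beta> a)" by (rule below_finite[OF roots])
  hence finV: "finite V" by (simp add: V_def)
  have zV: "zvec \<notin> V" by (simp add: V_def)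
  have aB: "a \<in> below p \<beta> a" using aNP by (simp add: below_def)
  have zB: "zvec \<in> below p \<beta> a" by (simp add: below_def NP_def zvec_def ul_def)
  have VNP: "V \<subseteq> NP p" by (auto simp: V_def below_def)
  have spV: "\<And>y. y \<in> below p \<beta> a \<Longrightarrow> splits p \<beta> y \<subseteq> V \<times> V"
    unfolding V_def by (rule splits_sub)
  have C: "(\<Sum>y\<in>V. tf a x y * tf y w z) = (\<Sum>y\<in>V. tf a y z * tf y x w)"
    if xV: "x \<in> V" and wV: "w \<in> V" and zzV: "z \<in> V" for x w z
  proof -
    have xN: "x \<in> NP p" "x \<noteq> zvec" and wN: "w \<in> NP p" "w \<noteq> zvec" and zN: "z \<in> NP p" "z \<noteq> zvec"
      using xV wV zzV VNP zV by auto
    have z1: "tf zvec x w = 0" unfolding tf_def by (rule tfull_zvec[OF roots xN wN(2)])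
    have z2: "tf zvec w z = 0" unfolding tf_def by (rule tfull_zvec[OF roots wN zN(2)])
    have "(\<Sum>y\<in>below p \<beta> a. tf a y z * tf y x w) = (\<Sum>y\<in>below p \<beta> a. tf a x y * tf y w z)"
      using coassoc aNP xN wN zN unfolding coassoc_coeffs_def tf_def by blast
    moreover have "(\<Sum>y\<in>below p \<beta> a. tf a y z * tf y x w) = (\<Sum>y\<in>V. tf a y z * tf y x w)"
      using sum.remove[OF finB zB, of "\<lambda>y. tf a y z * tf y x w"] z1 by (simp add: V_def)
    moreover have "(\<Sum>y\<in>below p \<beta> a. tf a x y * tf y w z) = (\<Sum>y\<in>V. tf a x y * tf y w z)"
      using sum.remove[OF finB zB, of "\<lambda>y. tf a x y * tf y w z"] z2 by (simp add: V_def)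
    ultimately show ?thesis by simp
  qed
  have "(\<Sum>(b, c)\<in>splits p \<beta> a. t a b c * (\<Sum>(d, e)\<in>splits p \<beta> c. t c d e * F b d e))
      = (\<Sum>b\<in>V. \<Sum>c\<in>V. tf a b c * (\<Sum>(d, e)\<in>splits p \<beta> c. t c d e * F b d e))"
    unfolding tf_def by (rule sum_splits_tfull[OF finV zV spV[OF aB]])
  also have "\<dots> = (\<Sum>b\<in>V. \<Sum>c\<in>V. tf a b c * (\<Sum>d\<in>V. \<Sum>e\<in>V. tf c d e * F b d e))"
    unfolding tf_def
    by (intro sum.cong refl arg_cong[where f = "\<lambda>x. _ * x"] sum_splits_tfull[OF finV zV spV])
       (auto simp: V_def)
  also have "\<dots> = (\<Sum>b\<in>V. \<Sum>c\<in>V. \<Sum>d\<in>V. \<Sum>e\<in>V. tf a b c * tf c d e * F b d e)"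
    by (simp add: sum_distrib_left mult.assoc)
  also have "\<dots> = (\<Sum>b\<in>V. \<Sum>d\<in>V. \<Sum>e\<in>V. \<Sum>c\<in>V. tf a b c * tf c d e * F b d e)"
    by (intro sum.cong refl swap3)
  also have "\<dots> = (\<Sum>b\<in>V. \<Sum>d\<in>V. \<Sum>e\<in>V. F b d e * (\<Sum>c\<in>V. tf a b c * tf c d e))"
    by (simp add: sum_distrib_left mult.commute mult.left_commute)
  also have "\<dots> = (\<Sum>b\<in>V. \<Sum>d\<in>V. \<Sum>e\<in>V. F b d e * (\<Sum>c\<in>V. tf a c e * tf c b d))"
    by (intro sum.cong refl arg_cong[where f = "\<lambda>x. _ * x"] C)
  also have "\<dots> = (\<Sum>d\<in>V. \<Sum>e\<in>V. \<Sum>c\<in>V. \<Sum>b\<in>V. tf a b c * tf b d e * F d e c)"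
    by (simp add: sum_distrib_left mult.commute mult.left_commute)
  also have "\<dots> = (\<Sum>b\<in>V. \<Sum>c\<in>V. \<Sum>d\<in>V. \<Sum>e\<in>V. tf a b c * tf b d e * F d e c)"
    by (rule perm4[symmetric])
  also have "\<dots> = (\<Sum>b\<in>V. \<Sum>c\<in>V. tf a b c * (\<Sum>d\<in>V. \<Sum>e\<in>V. tf b d e * F d e c))"
    by (simp add: sum_distrib_left mult.assoc)
  also have "\<dots> = (\<Sum>b\<in>V. \<Sum>c\<in>V. tf a b c * (\<Sum>(d, e)\<in>splits p \<beta> b. t b d e * F d e c))"
    unfolding tf_def
    by (intro sum.cong refl arg_cong[where f = "\<lambda>x. _ * x"] sum_splits_tfull[OF finV zV spV, symmetric])
       (auto simp: V_def)
  also have "\<dots> = (\<Sum>(b, c)\<in>splits p \<beta> a. t a b c * (\<Sum>(d, e)\<in>splits p \<beta> b. t b d e * F d e c))"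
    unfolding tf_def by (rule sum_splits_tfull[OF finV zV spV[OF aB], symmetric])
  finally show ?thesis .
qed


definition Dop :: "'g::ab_group_add \<Rightarrow> ('g \<Rightarrow> 'k::field) \<Rightarrow> 'g \<Rightarrow> 'g \<Rightarrow> 'k" where
  "Dop h w x y = w x * (if x = y then 1 else 0) - (if x = h then 1 else 0) * w y - w x * (if y = 0 then 1 else 0)"

lemma Dop_iff:
  "(gcomult w (x, y) = gtens (gdelta h) w (x, y) + gtens w (gdelta 0) (x, y) + R) \<longleftrightarrow> Dop h w x y = R"
  unfolding Dop_def gcomult_def gtens_def gdelta_def by (auto simp: algebra_simps)

lemma Dop_prim:
  "Dop h (\<lambda>x. m * (gdelta 0 x - gdelta h x) + s x) x y = Dop h s x y"
  unfolding Dop_def gdelta_def by (auto simp: algebra_simps)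

lemma Dop_diff:
  "Dop h (\<lambda>x. w x - s x) x y = Dop h w x y - Dop h s x y"
  unfolding Dop_def by (simp add: algebra_simps)

lemma Dop_sum:
  "Dop h (\<lambda>x. \<Sum>i\<in>A. f i x) x y = (\<Sum>i\<in>A. Dop h (f i) x y)"
  unfolding Dop_def by (simp add: sum_distrib_left sum_distrib_right sum_subtractf)

lemma Dop_scale:
  "Dop h (\<lambda>x. k * w x) x y = k * Dop h w x y"
  unfolding Dop_def by (simp add: algebra_simps)

theorem lemma2p9:
  fixes \<theta> p N n :: nat
    and g :: "nat \<Rightarrow> 'g::{ab_group_add, finite}"
    and \<beta> :: "nat \<Rightarrow> nat \<Rightarrow> nat"
    and t :: "(nat \<Rightarrow> nat) \<Rightarrow> (nat \<Rightarrow> nat) \<Rightarrow> (nat \<Rightarrow> nat) \<Rightarrow> 'k::field"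
    and \<mu> :: "(nat \<Rightarrow> nat) \<Rightarrow> 'k"
    and u :: "(nat \<Rightarrow> nat) \<Rightarrow> 'g \<Rightarrow> 'k"
    and a :: "nat \<Rightarrow> nat"
  assumes roots: "\<forall>l<p. (\<exists>i<\<theta>. \<beta> l i \<noteq> 0) \<and> (\<forall>i\<ge>\<theta>. \<beta> l i = 0)"
    and coassoc: "coassoc_coeffs p \<beta> t"
    and n_pos: "n \<ge> 1"
    and fam: "\<forall>b\<in>NP p. b \<noteq> zvec \<and> ht \<theta> (ul p \<beta> b) < n \<longrightarrow>
       (\<forall>x. u b x = \<mu> b * (gdelta 0 x - gdelta (hpow \<theta> g N p \<beta> b) x)
                    + (\<Sum>(d, e)\<in>splits p \<beta> b. t b d e * \<mu> d * u e x))
     \<and> (\<forall>x y. gcomult (u b) (x, y) =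
            gtens (gdelta (hpow \<theta> g N p \<beta> b)) (u b) (x, y) + gtens (u b) (gdelta 0) (x, y)
          + (\<Sum>(d, e)\<in>splits p \<beta> b.
               t b d e * gtens (gconv (u d) (gdelta (hpow \<theta> g N p \<beta> e))) (u e) (x, y)))"
    and a_NP: "a \<in> NP p"
    and ht_a: "ht \<theta> (ul p \<beta> a) = n"
  shows "(\<exists>\<mu>a. \<forall>x. u a x = \<mu>a * (gdelta 0 x - gdelta (hpow \<theta> g N p \<beta> a) x)
                    + (\<Sum>(b, c)\<in>splits p \<beta> a. t a b c * \<mu> b * u c x))
     \<longleftrightarrow> (\<forall>x y. gcomult (u a) (x, y) =
            gtens (gdelta (hpow \<theta> g N p \<beta> a)) (u a) (x, y) + gtens (u a) (gdelta 0) (x, y)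
          + (\<Sum>(b, c)\<in>splits p \<beta> a.
               t a b c * gtens (gconv (u b) (gdelta (hpow \<theta> g N p \<beta> c))) (u c) (x, y)))"
proof -
  define H where "H = hpow \<theta> g N p \<beta>"
  define SP where "SP = splits p \<beta>"
  define S where "S = (\<lambda>x. \<Sum>(b, c)\<in>SP a. t a b c * \<mu> b * u c x)"
  define T where "T = (\<lambda>x y. \<Sum>(b, c)\<in>SP a. t a b c * (u b (x - H c) * u c y))"
  have htpos: "ht \<theta> (ul p \<beta> c) > 0" if cc: "c \<in> NP p" "c \<noteq> zvec" for c
  proof -
    obtain i where i: "i < \<theta>" "ul p \<beta> c i > 0" using ul_pos[OF roots cc] by auto
    have "ul p \<beta> c i \<le> ht \<theta> (ul p \<beta> c)" unfolding ht_def using i by (intro member_le_sum) auto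
    thus ?thesis using i by linarith
  qed
  have spfacts: "b \<in> NP p \<and> b \<noteq> zvec \<and> ht \<theta> (ul p \<beta> b) < n \<and> c \<in> NP p \<and> c \<noteq> zvec \<and> ht \<theta> (ul p \<beta> c) < n
      \<and> H a = H b + H c"
    if bc: "(b, c) \<in> SP a" for b c
  proof -
    have m: "b \<in> NP p" "b \<noteq> zvec" "c \<in> NP p" "c \<noteq> zvec" using bc by (auto simp: SP_def splits_def)
    have eq: "ul p \<beta> a = (\<lambda>i. ul p \<beta> b i + ul p \<beta> c i)" using bc by (simp add: SP_def splits_def)
    have "ht \<theta> (ul p \<beta> a) = ht \<theta> (ul p \<beta> b) + ht \<theta> (ul p \<beta> c)"
      unfolding eq ht_def by (simp add: sum.distrib)
    moreover have "H a = H b + H c" unfolding H_def using bc by (simp add: SP_def hpow_split)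
    ultimately show ?thesis using m htpos[OF m(1,2)] htpos[OF m(3,4)] ht_a by auto
  qed
  have famU: "\<And>x. u b x = \<mu> b * (gdelta 0 x - gdelta (H b) x) + (\<Sum>(d, e)\<in>SP b. t b d e * \<mu> d * u e x)"
    and famC: "\<And>x y. Dop (H b) (u b) x y = (\<Sum>(d, e)\<in>SP b. t b d e * (u d (x - H e) * u e y))"
    if bb: "b \<in> NP p" "b \<noteq> zvec" "ht \<theta> (ul p \<beta> b) < n" for b
  proof -
    have F: "(\<forall>x. u b x = \<mu> b * (gdelta 0 x - gdelta (hpow \<theta> g N p \<beta> b) x)
                    + (\<Sum>(d, e)\<in>splits p \<beta> b. t b d e * \<mu> d * u e x))
     \<and> (\<forall>x y. gcomult (u b) (x, y) =
            gtens (gdelta (hpow \<theta> g N p \<beta> b)) (u b) (x, y) + gtens (u b) (gdelta 0) (x, y)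
          + (\<Sum>(d, e)\<in>splits p \<beta> b.
               t b d e * gtens (gconv (u d) (gdelta (hpow \<theta> g N p \<beta> e))) (u e) (x, y)))"
      using fam bb by blast
    show "\<And>x. u b x = \<mu> b * (gdelta 0 x - gdelta (H b) x) + (\<Sum>(d, e)\<in>SP b. t b d e * \<mu> d * u e x)"
      using F by (simp add: H_def SP_def)
    fix x y
    have "gcomult (u b) (x, y) =
            gtens (gdelta (H b)) (u b) (x, y) + gtens (u b) (gdelta 0) (x, y)
          + (\<Sum>(d, e)\<in>SP b. t b d e * (u d (x - H e) * u e y))"
      using F by (simp add: H_def SP_def gtens_def gconv_delta)
    thus "Dop (H b) (u b) x y = (\<Sum>(d, e)\<in>SP b. t b d e * (u d (x - H e) * u e y))"
      by (simp only: Dop_iff)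
  qed
  have KEY: "Dop (H a) S x y = T x y" for x y
  proof -
    define A where "A = (\<lambda>b c. t a b c * \<mu> b * ((gdelta (H c) x - gdelta (H a) x) * u c y))"
    have "Dop (H a) S x y = (\<Sum>(b, c)\<in>SP a. t a b c * \<mu> b * Dop (H a) (u c) x y)"
      unfolding S_def by (simp add: Dop_sum split_def Dop_scale)
    also have "\<dots> = (\<Sum>(b, c)\<in>SP a. A b c +
        t a b c * (\<Sum>(d, e)\<in>SP c. t c d e * (\<mu> b * (u d (x - H e) * u e y))))"
    proof (rule sum.cong[OF refl], clarify)
      fix b c assume bc: "(b, c) \<in> SP a"
      note f = spfacts[OF bc]
      have "Dop (H a) (u c) x y = Dop (H c) (u c) x y + (gdelta (H c) x - gdelta (H a) x) * u c y"
        unfolding Dop_def gdelta_def by (simp add: algebra_simps)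
      show "t a b c * \<mu> b * Dop (H a) (u c) x y = A b c +
        t a b c * (\<Sum>(d, e)\<in>SP c. t c d e * (\<mu> b * (u d (x - H e) * u e y)))"
      proof -
        have P: "Dop (H a) (u c) x y = (gdelta (H c) x - gdelta (H a) x) * u c y
            + (\<Sum>(d, e)\<in>SP c. t c d e * (u d (x - H e) * u e y))"
          using famC[of c x y] f \<open>Dop (H a) (u c) x y = _\<close> by simp
        have Q: "(\<Sum>(d, e)\<in>SP c. t c d e * (\<mu> b * (u d (x - H e) * u e y)))
            = \<mu> b * (\<Sum>(d, e)\<in>SP c. t c d e * (u d (x - H e) * u e y))"
          by (simp add: sum_distrib_left split_def mult.left_commute)
        show ?thesis unfolding P Q A_def by (simp add: algebra_simps)
      qed
    qed
    also have "\<dots> = (\<Sum>(b, c)\<in>SP a. A b c) +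
        (\<Sum>(b, c)\<in>SP a. t a b c * (\<Sum>(d, e)\<in>SP c. t c d e * (\<mu> b * (u d (x - H e) * u e y))))"
      by (simp add: sum.distrib split_def)
    also have "(\<Sum>(b, c)\<in>SP a. t a b c * (\<Sum>(d, e)\<in>SP c. t c d e * (\<mu> b * (u d (x - H e) * u e y))))
       = (\<Sum>(b, c)\<in>SP a. t a b c * (\<Sum>(d, e)\<in>SP b. t b d e * (\<mu> d * (u e (x - H c) * u c y))))"
      unfolding SP_def by (rule comb[OF roots coassoc a_NP])
    also have "(\<Sum>(b, c)\<in>SP a. A b c) +
        (\<Sum>(b, c)\<in>SP a. t a b c * (\<Sum>(d, e)\<in>SP b. t b d e * (\<mu> d * (u e (x - H c) * u c y))))
      = (\<Sum>(b, c)\<in>SP a. A b c +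
        t a b c * (\<Sum>(d, e)\<in>SP b. t b d e * (\<mu> d * (u e (x - H c) * u c y))))"
      by (simp add: sum.distrib split_def)
    also have "\<dots> = T x y" unfolding T_def
    proof (rule sum.cong[OF refl], clarify)
      fix b c assume bc: "(b, c) \<in> SP a"
      note f = spfacts[OF bc]
      have d1: "gdelta 0 (x - H c) = gdelta (H c) x" by (simp add: gdelta_def)
      have d2: "gdelta (H b) (x - H c) = gdelta (H a) x" using f by (simp add: gdelta_def diff_eq_eq add.commute)
      show "A b c + t a b c * (\<Sum>(d, e)\<in>SP b. t b d e * (\<mu> d * (u e (x - H c) * u c y)))
          = t a b c * (u b (x - H c) * u c y)"
      proof -
        have U: "u b (x - H c) = \<mu> b * (gdelta (H c) x - gdelta (H a) x)
             + (\<Sum>(d, e)\<in>SP b. t b d e * \<mu> d * u e (x - H c))"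
          using famU[of b "x - H c"] f unfolding d1 d2 by simp
        have Q: "(\<Sum>(d, e)\<in>SP b. t b d e * (\<mu> d * (u e (x - H c) * u c y)))
            = (\<Sum>(d, e)\<in>SP b. t b d e * \<mu> d * u e (x - H c)) * u c y"
          by (simp add: sum_distrib_right split_def mult.assoc)
        show ?thesis unfolding U Q A_def by (simp add: algebra_simps)
      qed
    qed
    finally show ?thesis .
  qed
  have iiform: "(\<forall>x y. gcomult (u a) (x, y) =
            gtens (gdelta (hpow \<theta> g N p \<beta> a)) (u a) (x, y) + gtens (u a) (gdelta 0) (x, y)
          + (\<Sum>(b, c)\<in>splits p \<beta> a.
               t a b c * gtens (gconv (u b) (gdelta (hpow \<theta> g N p \<beta> c))) (u c) (x, y)))
     \<longleftrightarrow> (\<forall>x y. Dop (H a) (u a) x y = T x y)"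
  proof -
    have se: "\<And>x y. (\<Sum>(b, c)\<in>splits p \<beta> a.
               t a b c * gtens (gconv (u b) (gdelta (hpow \<theta> g N p \<beta> c))) (u c) (x, y)) = T x y"
      by (simp add: T_def H_def SP_def gtens_def gconv_delta)
    show ?thesis unfolding se H_def by (simp only: Dop_iff)
  qed
  have iform: "(\<exists>\<mu>a. \<forall>x. u a x = \<mu>a * (gdelta 0 x - gdelta (hpow \<theta> g N p \<beta> a) x)
                    + (\<Sum>(b, c)\<in>splits p \<beta> a. t a b c * \<mu> b * u c x))
     \<longleftrightarrow> (\<exists>\<mu>a. \<forall>x. u a x = \<mu>a * (gdelta 0 x - gdelta (H a) x) + S x)"
    by (simp add: S_def H_def SP_def)
  show ?thesis unfolding iiform iform
  proof
    assume "\<exists>\<mu>a. \<forall>x. u a x = \<mu>a * (gdelta 0 x - gdelta (H a) x) + S x"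
    then obtain m where m: "\<forall>x. u a x = m * (gdelta 0 x - gdelta (H a) x) + S x" by blast
    hence "u a = (\<lambda>x. m * (gdelta 0 x - gdelta (H a) x) + S x)" by auto
    thus "\<forall>x y. Dop (H a) (u a) x y = T x y" by (simp add: Dop_prim KEY)
  next
    assume ii: "\<forall>x y. Dop (H a) (u a) x y = T x y"
    define v where "v = (\<lambda>x. u a x - S x)"
    have "Dop (H a) v x y = 0" for x y
      unfolding v_def Dop_diff using ii KEY by simp
    hence "\<forall>x y. gcomult v (x,y) = gtens (gdelta (H a)) v (x,y) + gtens v (gdelta 0) (x,y)"
      using Dop_iff[of v _ _ "H a" 0] by simp
    hence "\<forall>x. v x = v 0 * (gdelta 0 x - gdelta (H a) x)" by (rule skew)
    hence "\<forall>x. u a x = v 0 * (gdelta 0 x - gdelta (H a) x) + S x" by (simp add: v_def algebra_simps)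
    thus "\<exists>\<mu>a. \<forall>x. u a x = \<mu>a * (gdelta 0 x - gdelta (H a) x) + S x" by blast
  qed
qed

end
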